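(* Let $\mathsf{k}$ be a field, $R=\mathsf{k}[x,y]$, $S=R[t]$, $A=\mathsf{k}[t]/(t^3)$, $F_B=X-Y$, $G_1=Y^{[2]}-X^{[2]}$, $G_2=X^{[2]}Y-XY^{[2]}$ and $F=T^{[2]}F_B+TG_1+G_2\in Q_S$. Then $\operatorname{Ann}_R(G_1)\subseteq\operatorname{Ann}_R(F_B)$, so the ideals $I_i$ (defined below) satisfy $I_1=I_2=R$ and the condition $I_1\circ G_1\subseteq R\circ F_B$ fails; nevertheless $C=S/\operatorname{Ann}_S(F)$ is a free extension with base $A$ and fiber $B=R/\operatorname{Ann}_R(F_B)=R/(x+y,xy)$ (via $\iota,\pi$).
   Context: $Q_R=\mathsf{k}_{DP}[X,Y]$, $Q_S=\mathsf{k}_{DP}[X,Y,T]$ divided power rings with contraction action ($x^s\circ X^{[k]}=X^{[k-s]}$ for $k\ge s$, else $0$, similarly for $y,t$). $I_0=\operatorname{Ann}_R(F_B)$, $I_i=(I_{i-1}:\operatorname{Ann}_R(G_i))$ with $(I:J)=\{f:fJ\subseteq I\}$. $\iota:A\to C$ is induced by $\mathsf{k}[t]\subset S$, $\pi:C\to B$ by $t\mapsto 0$. $C$ is a free extension with base $A$ and fiber $B$ if $\iota$ makes $C$ a free $A$-module and $\pi$ is surjective with $\ker\pi=(\iota(A_+))C$. *)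

theory Defs
  imports "HOL-Library.Poly_Mapping" "HOL-Library.Product_Plus"
          "HOL-Computational_Algebra.Polynomial"
begin

text \<open>Polynomial rings as finitely supported functions from exponent vectors to coefficients.
  R = k[x,y]: monomial x^a y^b is the key (a,b).
  S = k[x,y,t]: monomial x^a y^b t^c is the key (a,b,c).
  The multiplication is the convolution product of Poly_Mapping.
  Divided power rings Q_R, Q_S are represented by the same types of finitely supported
  functions: key (i,j) stands for X^[i] Y^[j], key (i,j,k) for X^[i] Y^[j] T^[k].\<close>

type_synonym 'k polR = "(nat \<times> nat) \<Rightarrow>\<^sub>0 'k"
type_synonym 'k polS = "(nat \<times> nat \<times> nat) \<Rightarrow>\<^sub>0 'k"
type_synonym 'k dpR = "(nat \<times> nat) \<Rightarrow>\<^sub>0 'k"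
type_synonym 'k dpS = "(nat \<times> nat \<times> nat) \<Rightarrow>\<^sub>0 'k"

definition contractR :: "'k::comm_ring_1 polR \<Rightarrow> 'k dpR \<Rightarrow> 'k dpR" where
  "contractR f G =
     (\<Sum>m\<in>Poly_Mapping.keys f. \<Sum>n\<in>Poly_Mapping.keys G.
        if fst m \<le> fst n \<and> snd m \<le> snd n
        then Poly_Mapping.single (fst n - fst m, snd n - snd m) (Poly_Mapping.lookup f m * Poly_Mapping.lookup G n)
        else 0)"

definition contractS :: "'k::comm_ring_1 polS \<Rightarrow> 'k dpS \<Rightarrow> 'k dpS" where
  "contractS f G =
     (\<Sum>m\<in>Poly_Mapping.keys f. \<Sum>n\<in>Poly_Mapping.keys G.
        case m of (a,b,c) \<Rightarrow> case n of (i,j,k) \<Rightarrow>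
        if a \<le> i \<and> b \<le> j \<and> c \<le> k
        then Poly_Mapping.single (i - a, j - b, k - c) (Poly_Mapping.lookup f m * Poly_Mapping.lookup G n)
        else 0)"

definition AnnR :: "'k::comm_ring_1 dpR \<Rightarrow> 'k polR set" where
  "AnnR G = {f. contractR f G = 0}"

definition AnnS :: "'k::comm_ring_1 dpS \<Rightarrow> 'k polS set" where
  "AnnS G = {f. contractS f G = 0}"

definition colon :: "'a::comm_ring_1 set \<Rightarrow> 'a set \<Rightarrow> 'a set" where
  "colon I J = {f. \<forall>g\<in>J. f * g \<in> I}"

definition varx :: "'k::comm_ring_1 polR" where "varx = Poly_Mapping.single (1,0) 1"
definition vary :: "'k::comm_ring_1 polR" where "vary = Poly_Mapping.single (0,1) 1"

definition ideal2 :: "'a::comm_ring_1 \<Rightarrow> 'a \<Rightarrow> 'a set" where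
  "ideal2 p q = {a * p + b * q | a b. True}"

definition FB :: "'k::comm_ring_1 dpR" where
  "FB = Poly_Mapping.single (1,0) 1 - Poly_Mapping.single (0,1) 1"
definition G1 :: "'k::comm_ring_1 dpR" where
  "G1 = Poly_Mapping.single (0,2) 1 - Poly_Mapping.single (2,0) 1"
definition G2 :: "'k::comm_ring_1 dpR" where
  "G2 = Poly_Mapping.single (2,1) 1 - Poly_Mapping.single (1,2) 1"

definition timesTdp :: "nat \<Rightarrow> 'k::comm_ring_1 dpR \<Rightarrow> 'k dpS" where
  "timesTdp c G = (\<Sum>n\<in>Poly_Mapping.keys G. Poly_Mapping.single (fst n, snd n, c) (Poly_Mapping.lookup G n))"

definition Fbig :: "'k::comm_ring_1 dpS" where
  "Fbig = timesTdp 2 FB + timesTdp 1 G1 + timesTdp 0 G2"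

definition I0 :: "'k::comm_ring_1 polR set" where "I0 = AnnR FB"
definition I1 :: "'k::comm_ring_1 polR set" where "I1 = colon I0 (AnnR G1)"
definition I2 :: "'k::comm_ring_1 polR set" where "I2 = colon I1 (AnnR G2)"

definition tpoly :: "'k::comm_ring_1 poly \<Rightarrow> 'k polS" where
  "tpoly p = (\<Sum>i\<le>degree p. Poly_Mapping.single (0,0,i) (coeff p i))"

definition tzero :: "'k::comm_ring_1 polS \<Rightarrow> 'k polR" where
  "tzero s = (\<Sum>m\<in>Poly_Mapping.keys s. case m of (a,b,c) \<Rightarrow>
                 if c = 0 then Poly_Mapping.single (a,b) (Poly_Mapping.lookup s m) else 0)"

text \<open>C = S/J is a free module over A = k[t]/(t^3) (A acting via \<iota>), written out on
  representatives: there is a family E of elements of S whose classes form an A-basis of C.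
  Coefficients are polynomials in t, and a coefficient is zero in A iff t^3 divides it.\<close>
definition free_over_A :: "'k::field polS set \<Rightarrow> bool" where
  "free_over_A J \<longleftrightarrow> (\<exists>E::'k polS set.
     (\<forall>s. \<exists>c::'k polS \<Rightarrow> 'k poly. finite {e\<in>E. c e \<noteq> 0} \<and>
            s - (\<Sum>e\<in>{e\<in>E. c e \<noteq> 0}. tpoly (c e) * e) \<in> J) \<and>
     (\<forall>c::'k polS \<Rightarrow> 'k poly. finite {e\<in>E. c e \<noteq> 0} \<longrightarrow>
            (\<Sum>e\<in>{e\<in>E. c e \<noteq> 0}. tpoly (c e) * e) \<in> J \<longrightarrow>
            (\<forall>e\<in>E. [:0,0,0,1:] dvd c e)))"

text \<open>Free extension C = S/J with base A = k[t]/(t^3) and fiber B = R/K, via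
  \<iota> : A \<rightarrow> C induced by k[t] \<subseteq> S and \<pi> : C \<rightarrow> B induced by t \<mapsto> 0:
  \<iota> and \<pi> are well defined, C is a free A-module, \<pi> is surjective and
  ker \<pi> = \<iota>(A_+) C (A_+ = (t)/(t^3), so \<iota>(A_+)C is the image of the ideal t S).\<close>
definition free_extension :: "'k::field polS set \<Rightarrow> 'k polR set \<Rightarrow> bool" where
  "free_extension J K \<longleftrightarrow>
     (\<forall>p. [:0,0,0,1:] dvd p \<longrightarrow> tpoly p \<in> J) \<and>
     (\<forall>s\<in>J. tzero s \<in> K) \<and>
     free_over_A J \<and>
     (\<forall>r. \<exists>s. r - tzero s \<in> K) \<and>
     (\<forall>s. tzero s \<in> K \<longleftrightarrow> (\<exists>u. s - tpoly [:0,1:] * u \<in> J))"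

end

theory Submission
  imports Defs
begin

lemma t3_dvd_iff: "([:0,0,0,1:] :: 'a::comm_semiring_1 poly) dvd p \<longleftrightarrow> coeff p 0 = 0 \<and> coeff p 1 = 0 \<and> coeff p 2 = 0"
proof -
  have "([:0,0,0,1:] :: 'a poly) = monom 1 3"
    by (simp add: monom_Suc numeral_3_eq_3 monom_0 one_pCons)
  then show ?thesis by (auto simp add: monom_1_dvd_iff' less_Suc_eq numeral_3_eq_3 numeral_2_eq_2)
qed

lemma cond3: "(((a::nat) \<le> (i::nat) \<and> (b::nat) \<le> (j::nat) \<and> (c::nat) \<le> (k::nat)) \<and> (i-a, j-b, k-c) = (q1,q2,q3)) \<longleftrightarrow>
   ((a,b,c) = (i-q1,j-q2,k-q3) \<and> (q1 \<le> i \<and> q2 \<le> j \<and> q3 \<le> k))"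
  by (auto simp: diff_diff_cancel)
lemma cond2: "(((a::nat) \<le> (i::nat) \<and> (b::nat) \<le> (j::nat)) \<and> (i-a, j-b) = (q1,q2)) \<longleftrightarrow>
   ((a,b) = (i-q1,j-q2) \<and> (q1 \<le> i \<and> q2 \<le> j))"
  by (auto simp: diff_diff_cancel)
lemma lookup_if_single: "Poly_Mapping.lookup (if P then Poly_Mapping.single p x else 0) q = (if P \<and> p = q then x else 0)"
  by (simp add: lookup_single when_def)

lemma inner3: "Poly_Mapping.lookup (case (m::nat\<times>nat\<times>nat) of (a,b,c) \<Rightarrow> case (n::nat\<times>nat\<times>nat) of (i,j,k) \<Rightarrow>
        if a \<le> i \<and> b \<le> j \<and> c \<le> k
        then Poly_Mapping.single (i - a, j - b, k - c) (x m n::'k::comm_ring_1)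
        else 0) (q1,q2,q3) =
     (if m = (fst n - q1, fst (snd n) - q2, snd (snd n) - q3) then
       (if q1 \<le> fst n \<and> q2 \<le> fst (snd n) \<and> q3 \<le> snd (snd n) then x m n else 0) else 0)"
proof -
  obtain a b c where m: "m = (a,b,c)" by (cases m) 
  obtain i j k where n: "n = (i,j,k)" by (cases n)
  show ?thesis unfolding m n prod.case lookup_if_single by (simp only: cond3) simp
qed

lemma inner2: "Poly_Mapping.lookup (
        if fst (m::nat\<times>nat) \<le> fst (n::nat\<times>nat) \<and> snd m \<le> snd n
        then Poly_Mapping.single (fst n - fst m, snd n - snd m) (x m n::'k::comm_ring_1)
        else 0) (q1,q2) =
     (if m = (fst n - q1, snd n - q2) then
       (if q1 \<le> fst n \<and> q2 \<le> snd n then x m n else 0) else 0)"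
proof -
  obtain a b where m: "m = (a,b)" by (cases m) 
  obtain i j where n: "n = (i,j)" by (cases n)
  show ?thesis unfolding m n fst_conv snd_conv lookup_if_single by (simp only: cond2) simp
qed

lemma lookup_contractS:
  "Poly_Mapping.lookup (contractS f G) (q1,q2,q3) =
   (\<Sum>n\<in>Poly_Mapping.keys G. if q1 \<le> fst n \<and> q2 \<le> fst (snd n) \<and> q3 \<le> snd (snd n)
      then Poly_Mapping.lookup f (fst n - q1, fst (snd n) - q2, snd (snd n) - q3) * Poly_Mapping.lookup G n else 0)"
  unfolding contractS_def lookup_sum
  apply (simp only: inner3[where x="\<lambda>m n. Poly_Mapping.lookup f m * Poly_Mapping.lookup G n"])
  apply (subst sum.swap)
  apply (rule sum.cong[OF refl])
  apply (subst sum.delta)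
   apply (simp_all add: in_keys_iff)
  done

lemma lookup_contractR:
  "Poly_Mapping.lookup (contractR f G) (q1,q2) =
   (\<Sum>n\<in>Poly_Mapping.keys G. if q1 \<le> fst n \<and> q2 \<le> snd n
      then Poly_Mapping.lookup f (fst n - q1, snd n - q2) * Poly_Mapping.lookup G n else 0)"
  unfolding contractR_def lookup_sum
  apply (simp only: inner2[where x="\<lambda>m n. Poly_Mapping.lookup f m * Poly_Mapping.lookup G n"])
  apply (subst sum.swap)
  apply (rule sum.cong[OF refl])
  apply (subst sum.delta)
   apply (simp_all add: in_keys_iff)
  done

lemma sum_keys_superset:
  assumes "finite P" "\<And>n. n \<notin> P \<Longrightarrow> Poly_Mapping.lookup G n = 0"
    and "\<And>n. Poly_Mapping.lookup G n = 0 \<Longrightarrow> g n = 0"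
  shows "(\<Sum>n\<in>Poly_Mapping.keys G. g n) = (\<Sum>n\<in>P. g n)"
  apply (rule sum.mono_neutral_left)
  using assms by (auto simp: in_keys_iff)


lemma lookup_timesTdp:
  "Poly_Mapping.lookup (timesTdp c G) (i,j,k) = (if k = c then Poly_Mapping.lookup G (i,j) else 0)"
proof -
  have "Poly_Mapping.lookup (timesTdp c G) (i,j,k) =
     (\<Sum>n\<in>Poly_Mapping.keys G. if n = (i,j) then (if k = c then Poly_Mapping.lookup G n else 0) else 0)"
    unfolding timesTdp_def lookup_sum
    by (rule sum.cong) (auto simp: lookup_single when_def)
  also have "\<dots> = (if k = c then Poly_Mapping.lookup G (i,j) else 0)"
    by (subst sum.delta) (auto simp: in_keys_iff)
  finally show ?thesis .
qed

lemma lookup_FB: "Poly_Mapping.lookup (FB::'k::comm_ring_1 dpR) (i,j) =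
   (if (i,j) = (1,0) then 1 else if (i,j) = (0,1) then -1 else 0)"
  unfolding FB_def lookup_minus lookup_single when_def by simp
lemma lookup_G1: "Poly_Mapping.lookup (G1::'k::comm_ring_1 dpR) (i,j) =
   (if (i,j) = (0,2) then 1 else if (i,j) = (2,0) then -1 else 0)"
  unfolding G1_def lookup_minus lookup_single when_def by simp
lemma lookup_G2: "Poly_Mapping.lookup (G2::'k::comm_ring_1 dpR) (i,j) =
   (if (i,j) = (2,1) then 1 else if (i,j) = (1,2) then -1 else 0)"
  unfolding G2_def lookup_minus lookup_single when_def by simp


abbreviation lk where "lk \<equiv> Poly_Mapping.lookup"

lemma lookup_Fbig: "lk (Fbig::'k::comm_ring_1 dpS) (i,j,k) =
   (if (i,j,k) = (1,0,2) then 1 else if (i,j,k) = (0,1,2) then -1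
    else if (i,j,k) = (0,2,1) then 1 else if (i,j,k) = (2,0,1) then -1
    else if (i,j,k) = (2,1,0) then 1 else if (i,j,k) = (1,2,0) then -1 else 0)"
  by (simp add: Fbig_def lookup_add lookup_timesTdp lookup_FB lookup_G1 lookup_G2)

lemma contractS_Fbig: "lk (contractS s (Fbig::'k::comm_ring_1 dpS)) (q1,q2,q3) =
   (if q1 \<le> 1 \<and> q2 \<le> 0 \<and> q3 \<le> 2 then lk s (1-q1, 0-q2, 2-q3) else 0)
 - (if q1 \<le> 0 \<and> q2 \<le> 1 \<and> q3 \<le> 2 then lk s (0-q1, 1-q2, 2-q3) else 0)
 + (if q1 \<le> 0 \<and> q2 \<le> 2 \<and> q3 \<le> 1 then lk s (0-q1, 2-q2, 1-q3) else 0)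
 - (if q1 \<le> 2 \<and> q2 \<le> 0 \<and> q3 \<le> 1 then lk s (2-q1, 0-q2, 1-q3) else 0)
 + (if q1 \<le> 2 \<and> q2 \<le> 1 \<and> q3 \<le> 0 then lk s (2-q1, 1-q2, 0-q3) else 0)
 - (if q1 \<le> 1 \<and> q2 \<le> 2 \<and> q3 \<le> 0 then lk s (1-q1, 2-q2, 0-q3) else 0)"
proof -
  let ?P = "{(1,0,2),(0,1,2),(0,2,1),(2,0,1),(2,1,0),(1,2,0)} :: (nat\<times>nat\<times>nat) set"
  have "lk (contractS s (Fbig::'k dpS)) (q1,q2,q3) = (\<Sum>n\<in>?P. if q1 \<le> fst n \<and> q2 \<le> fst (snd n) \<and> q3 \<le> snd (snd n)
      then lk s (fst n - q1, fst (snd n) - q2, snd (snd n) - q3) * lk Fbig n else 0)"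
    unfolding lookup_contractS
    apply (rule sum_keys_superset)
    apply simp
    subgoal for n by (cases n) (auto simp: lookup_Fbig)
    by simp
  then show ?thesis by (simp add: lookup_Fbig)
qed


lemma le2_cases: "(q::nat) \<le> 2 \<Longrightarrow> q = 0 \<or> q = 1 \<or> q = 2" by auto

definition Jcond :: "'k::comm_ring_1 polS \<Rightarrow> bool" where
 "Jcond s \<longleftrightarrow> lk s (0,0,0) = 0 \<and> lk s (1,0,0) = lk s (0,0,1) \<and> lk s (0,1,0) = lk s (0,0,1)
   \<and> lk s (0,0,2) - lk s (1,0,1) + lk s (1,1,0) - lk s (0,2,0) = 0
   \<and> - lk s (0,0,2) + lk s (0,1,1) + lk s (2,0,0) - lk s (1,1,0) = 0
   \<and> lk s (1,0,2) - lk s (0,1,2) + lk s (0,2,1) - lk s (2,0,1) + lk s (2,1,0) - lk s (1,2,0) = 0"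

lemma memJ: "s \<in> AnnS (Fbig::'k::comm_ring_1 dpS) \<longleftrightarrow> Jcond s"
proof
  assume "s \<in> AnnS Fbig"
  then have z: "\<And>q1 q2 q3. lk (contractS s (Fbig::'k dpS)) (q1,q2,q3) = 0" by (simp add: AnnS_def)
  note zz = z[unfolded contractS_Fbig]
  show "Jcond s" unfolding Jcond_def
    using zz[of 0 0 0] zz[of 1 0 0] zz[of 0 1 0] zz[of 0 0 1] zz[of 2 0 0] zz[of 0 2 0]
      zz[of 0 0 2] zz[of 1 1 0] zz[of 1 0 1] zz[of 0 1 1] zz[of 1 0 2]
    by (simp add: algebra_simps)
next
  assume J: "Jcond s"
  have "lk (contractS s (Fbig::'k dpS)) (q1,q2,q3) = 0" for q1 q2 q3
  proof (cases "q1 \<le> 2 \<and> q2 \<le> 2 \<and> q3 \<le> 2")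
    case True
    then show ?thesis unfolding contractS_Fbig using J[unfolded Jcond_def] 
      apply (elim conjE)
      apply (drule le2_cases)+
      apply (elim disjE)
      by (simp_all add: algebra_simps)
  next
    case False
    then show ?thesis unfolding contractS_Fbig by auto
  qed
  then show "s \<in> AnnS Fbig" unfolding AnnS_def
    by (auto intro!: poly_mapping_eqI)
qed

lemma lookup_mult_single_gen:
  "lk (a * Poly_Mapping.single (k::'a::cancel_comm_monoid_add) (c::'b::comm_semiring_1)) n = (\<Sum>l. lk a l * c when n = l + k)"
proof -
  have e: "((c when k = q) when n = l + q) = ((c when n = l + k) when k = q)" for q l
    by (auto simp: when_def)
  have i: "(\<Sum>q. ((c when k = q) when n = l + q)) = (c when n = l + k)" for l
    by (simp only: e Sum_any_when_equal')
  show ?thesis by (simp add: lookup_mult lookup_single i mult_when)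
qed

lemma lookup_mult_single_shift:
  "lk (a * Poly_Mapping.single (k::'a::cancel_comm_monoid_add) (c::'b::comm_semiring_1)) (n + k) = lk a n * c"
  unfolding lookup_mult_single_gen by simp

lemma lookup_mult_single_zero:
  "(\<And>l. n \<noteq> l + k) \<Longrightarrow> lk (a * Poly_Mapping.single (k::'a::cancel_comm_monoid_add) (c::'b::comm_semiring_1)) n = 0"
  unfolding lookup_mult_single_gen by simp

lemma contractR_FB: "lk (contractR f (FB::'k::comm_ring_1 dpR)) (q1,q2) =
   (if q1 \<le> 1 \<and> q2 \<le> 0 then lk f (1-q1, 0-q2) else 0)
 - (if q1 \<le> 0 \<and> q2 \<le> 1 then lk f (0-q1, 1-q2) else 0)"
proof -
  let ?P = "{(1,0),(0,1)} :: (nat\<times>nat) set"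
  have "lk (contractR f (FB::'k dpR)) (q1,q2) = (\<Sum>n\<in>?P. if q1 \<le> fst n \<and> q2 \<le> snd n
      then lk f (fst n - q1, snd n - q2) * lk FB n else 0)"
    unfolding lookup_contractR
    apply (rule sum_keys_superset)
    apply simp
    subgoal for n by (cases n) (auto simp: lookup_FB)
    by simp
  then show ?thesis by (simp add: lookup_FB)
qed

lemma contractR_G1: "lk (contractR f (G1::'k::comm_ring_1 dpR)) (q1,q2) =
   (if q1 \<le> 0 \<and> q2 \<le> 2 then lk f (0-q1, 2-q2) else 0)
 - (if q1 \<le> 2 \<and> q2 \<le> 0 then lk f (2-q1, 0-q2) else 0)"
proof -
  let ?P = "{(0,2),(2,0)} :: (nat\<times>nat) set"
  have "lk (contractR f (G1::'k dpR)) (q1,q2) = (\<Sum>n\<in>?P. if q1 \<le> fst n \<and> q2 \<le> snd n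
      then lk f (fst n - q1, snd n - q2) * lk G1 n else 0)"
    unfolding lookup_contractR
    apply (rule sum_keys_superset)
    apply simp
    subgoal for n by (cases n) (auto simp: lookup_G1)
    by simp
  then show ?thesis by (simp add: lookup_G1)
qed

lemma memK: "f \<in> AnnR (FB::'k::comm_ring_1 dpR) \<longleftrightarrow> lk f (0,0) = 0 \<and> lk f (1,0) = lk f (0,1)"
proof
  assume "f \<in> AnnR FB"
  then have z: "\<And>q1 q2. lk (contractR f (FB::'k dpR)) (q1,q2) = 0" by (simp add: AnnR_def)
  note zz = z[unfolded contractR_FB]
  show "lk f (0,0) = 0 \<and> lk f (1,0) = lk f (0,1)"
    using zz[of 0 0] zz[of 1 0] by simp
next
  assume J: "lk f (0,0) = 0 \<and> lk f (1,0) = lk f (0,1)"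
  have "lk (contractR f (FB::'k dpR)) (q1,q2) = 0" for q1 q2
  proof (cases "q1 \<le> 1 \<and> q2 \<le> 1")
    case True
    then have "q1 = 0 \<or> q1 = 1" "q2 = 0 \<or> q2 = 1" by auto
    then show ?thesis unfolding contractR_FB using J by auto
  next
    case False
    then show ?thesis unfolding contractR_FB by auto
  qed
  then show "f \<in> AnnR FB" unfolding AnnR_def
    by (auto intro!: poly_mapping_eqI)
qed

lemma AnnG1_D: "f \<in> AnnR (G1::'k::comm_ring_1 dpR) \<Longrightarrow> lk f (0,0) = 0 \<and> lk f (1,0) = 0 \<and> lk f (0,1) = 0"
proof -
  assume "f \<in> AnnR G1"
  then have z: "\<And>q1 q2. lk (contractR f (G1::'k dpR)) (q1,q2) = 0" by (simp add: AnnR_def)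
  note zz = z[unfolded contractR_G1]
  show ?thesis using zz[of 0 2] zz[of 1 0] zz[of 0 1] by simp
qed


lemma lk_mult_single2: "lk (a * Poly_Mapping.single (k1::nat,k2::nat) (c::'b::comm_semiring_1)) (n1,n2) =
   (if k1 \<le> n1 \<and> k2 \<le> n2 then lk a (n1-k1, n2-k2) * c else 0)"
proof (cases "k1 \<le> n1 \<and> k2 \<le> n2")
  case True
  then have "(n1,n2) = (n1-k1, n2-k2) + (k1,k2)" by simp
  then show ?thesis using True by (metis lookup_mult_single_shift)
next
  case False
  then have "\<And>l. (n1,n2) \<noteq> l + (k1,k2)" by (auto simp: prod_eq_iff)
  then have "lk (a * Poly_Mapping.single (k1,k2) c) (n1,n2) = 0" by (rule lookup_mult_single_zero)
  then show ?thesis using False by auto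
qed

lemma lk_mult_single3: "lk (a * Poly_Mapping.single (k1::nat,k2::nat,k3::nat) (c::'b::comm_semiring_1)) (n1,n2,n3) =
   (if k1 \<le> n1 \<and> k2 \<le> n2 \<and> k3 \<le> n3 then lk a (n1-k1, n2-k2, n3-k3) * c else 0)"
proof (cases "k1 \<le> n1 \<and> k2 \<le> n2 \<and> k3 \<le> n3")
  case True
  then have "(n1,n2,n3) = (n1-k1, n2-k2, n3-k3) + (k1,k2,k3)" by simp
  then show ?thesis using True by (metis lookup_mult_single_shift)
next
  case False
  then have "\<And>l. (n1,n2,n3) \<noteq> l + (k1,k2,k3)" by (auto simp: prod_eq_iff)
  then have "lk (a * Poly_Mapping.single (k1,k2,k3) c) (n1,n2,n3) = 0" by (rule lookup_mult_single_zero)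
  then show ?thesis using False by auto
qed

lemma varxy: "varx * vary = (Poly_Mapping.single (1,1) 1 :: 'k::comm_ring_1 polR)"
  by (simp add: varx_def vary_def mult_single)

lemma ideal2_sub: "ideal2 (varx + vary) (varx * vary) \<subseteq> AnnR (FB::'k::comm_ring_1 dpR)"
proof
  fix f :: "'k polR" assume "f \<in> ideal2 (varx + vary) (varx * vary)"
  then obtain a b where f: "f = a * (varx + vary) + b * (varx * vary)" by (auto simp: ideal2_def)
  show "f \<in> AnnR FB" unfolding memK f varxy distrib_left
    by (simp add: lookup_add varx_def vary_def lk_mult_single2)
qed

lemma ideal2_add: assumes "u \<in> ideal2 p q" "v \<in> ideal2 p q" shows "u + v \<in> ideal2 p q"
proof -
  obtain a b where u: "u = a * p + b * q" using assms(1) by (auto simp: ideal2_def)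
  obtain c d where v: "v = c * p + d * q" using assms(2) by (auto simp: ideal2_def)
  have "u + v = (a + c) * p + (b + d) * q" unfolding u v by (simp add: algebra_simps)
  then show ?thesis unfolding ideal2_def by blast
qed

lemma ideal2_mult: assumes "u \<in> ideal2 p q" shows "r * u \<in> ideal2 p q"
proof -
  obtain a b where u: "u = a * p + b * q" using assms(1) by (auto simp: ideal2_def)
  have "r * u = (r * a) * p + (r * b) * q" unfolding u by (simp add: algebra_simps)
  then show ?thesis unfolding ideal2_def by blast
qed

lemma ideal2_zero: "0 \<in> ideal2 p q"
  unfolding ideal2_def by (rule CollectI, rule exI[of _ 0], rule exI[of _ 0]) simp

lemma ideal2_sum: "finite A \<Longrightarrow> (\<And>i. i \<in> A \<Longrightarrow> g i \<in> ideal2 p q) \<Longrightarrow> sum g A \<in> ideal2 p q"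
  by (induction A rule: finite_induct) (auto intro: ideal2_add ideal2_zero)

lemma ideal2_gen1: "p \<in> ideal2 p q"
  unfolding ideal2_def by (rule CollectI, rule exI[of _ 1], rule exI[of _ 0]) simp
lemma ideal2_gen2: "q \<in> ideal2 p q"
  unfolding ideal2_def by (rule CollectI, rule exI[of _ 0], rule exI[of _ 1]) simp

lemma poly_mapping_expand: "f = (\<Sum>m\<in>Poly_Mapping.keys f. Poly_Mapping.single m (lk f m))"
  by (rule poly_mapping_eqI) (simp add: lookup_sum lookup_single when_def in_keys_iff)


lemma mono_in_ideal2:
  assumes "i + j \<ge> 2"
  shows "Poly_Mapping.single (i,j) v \<in> ideal2 (varx + vary) (varx * vary :: 'k::comm_ring_1 polR)"
proof -
  have x: "varx = (Poly_Mapping.single (1,0) 1 :: 'k polR)" and y: "vary = (Poly_Mapping.single (0,1) 1 :: 'k polR)"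
    by (simp_all add: varx_def vary_def)
  consider "i \<ge> 1" "j \<ge> 1" | "j = 0" "i \<ge> 2" | "i = 0" "j \<ge> 2" using assms by linarith
  then show ?thesis
  proof cases
    case 1
    have "Poly_Mapping.single (i,j) v = Poly_Mapping.single (i-1,j-1) v * (varx * vary :: 'k polR)"
      using 1 by (simp add: varxy mult_single)
    then show ?thesis by (metis ideal2_mult ideal2_gen2)
  next
    case 2
    have "Poly_Mapping.single (i,j) v = Poly_Mapping.single (i-1,0) v * (varx + vary :: 'k polR)
       + (- Poly_Mapping.single (i-2,0) v) * (varx * vary)"
      using 2 by (simp add: varxy x y mult_single distrib_left numeral_2_eq_2 Suc_diff_Suc)
    then show ?thesis by (metis ideal2_mult ideal2_gen2 ideal2_gen1 ideal2_add)
  next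
    case 3
    have "Poly_Mapping.single (i,j) v = Poly_Mapping.single (0,j-1) v * (varx + vary :: 'k polR)
       + (- Poly_Mapping.single (0,j-2) v) * (varx * vary)"
      using 3 by (simp add: varxy x y mult_single distrib_left numeral_2_eq_2 Suc_diff_Suc)
    then show ?thesis by (metis ideal2_mult ideal2_gen2 ideal2_gen1 ideal2_add)
  qed
qed

lemma AnnFB_eq: "AnnR (FB::'k::comm_ring_1 dpR) = ideal2 (varx + vary) (varx * vary)"
proof
  show "ideal2 (varx + vary) (varx * vary) \<subseteq> AnnR (FB::'k dpR)" by (rule ideal2_sub)
  show "AnnR (FB::'k dpR) \<subseteq> ideal2 (varx + vary) (varx * vary)"
  proof
    fix f :: "'k polR" assume "f \<in> AnnR FB"
    then have f: "lk f (0,0) = 0" "lk f (1,0) = lk f (0,1)" by (simp_all add: memK)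
    define c where "c = lk f (1,0)"
    define g where "g = f - Poly_Mapping.single (1,0) c - Poly_Mapping.single (0,1) c"
    have fg: "f = g + Poly_Mapping.single (0,0) c * (varx + vary)"
      by (simp add: g_def varx_def vary_def mult_single distrib_left)
    have g0: "m \<in> Poly_Mapping.keys g \<Longrightarrow> fst m + snd m \<ge> 2" for m
    proof (rule ccontr)
      assume m: "m \<in> Poly_Mapping.keys g" and "\<not> fst m + snd m \<ge> 2"
      then have "m = (0,0) \<or> m = (1,0) \<or> m = (0,1)" by (cases m) auto
      moreover have "lk g m \<noteq> 0" using m by (simp add: in_keys_iff)
      ultimately show False using f by (auto simp: g_def c_def lookup_minus lookup_single when_def)
    qed
    have "g \<in> ideal2 (varx + vary) (varx * vary)"
      apply (subst poly_mapping_expand)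
      apply (rule ideal2_sum)
       apply simp
      subgoal for m using g0[of m] by (cases m) (auto intro: mono_in_ideal2)
      done
    moreover have "Poly_Mapping.single (0,0) c * (varx + vary) \<in> ideal2 (varx + vary) (varx * vary :: 'k polR)"
      by (rule ideal2_mult[OF ideal2_gen1])
    ultimately show "f \<in> ideal2 (varx + vary) (varx * vary)"
      by (subst fg) (rule ideal2_add)
  qed
qed


lemma lookup_tpoly: "lk (tpoly p) (a,b,c) = (if a = 0 \<and> b = 0 then coeff p c else 0)"
proof -
  have "lk (tpoly p) (a,b,c) = (\<Sum>i\<le>degree p. if i = c then (if a = 0 \<and> b = 0 then coeff p i else 0) else 0)"
    unfolding tpoly_def lookup_sum by (rule sum.cong) (auto simp: lookup_single when_def)
  also have "\<dots> = (if a = 0 \<and> b = 0 then coeff p c else 0)"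
    by (subst sum.delta) (auto simp: coeff_eq_0)
  finally show ?thesis .
qed

lemma lookup_tzero: "lk (tzero s) (a,b) = lk s (a,b,0)"
proof -
  have inner: "lk (case m of (a',b',c') \<Rightarrow> if c' = 0 then Poly_Mapping.single (a',b') (lk s m) else 0) (a,b)
     = (if m = (a,b,0) then lk s m else 0)" for m :: "nat\<times>nat\<times>nat"
    by (cases m) (auto simp: lookup_single when_def)
  have "lk (tzero s) (a,b) = (\<Sum>m\<in>Poly_Mapping.keys s. if m = (a,b,0) then lk s m else 0)"
    unfolding tzero_def lookup_sum by (simp only: inner)
  also have "\<dots> = lk s (a,b,0)"
    by (subst sum.delta) (auto simp: in_keys_iff)
  finally show ?thesis .
qed

lemma tpoly_t: "tpoly [:0,1:] = (Poly_Mapping.single (0,0,1) 1 :: 'k::comm_ring_1 polS)"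
proof (rule poly_mapping_eqI)
  fix k :: "nat\<times>nat\<times>nat"
  obtain a b c where k: "k = (a,b,c)" by (cases k)
  show "lk (tpoly [:0,1:]) k = lk (Poly_Mapping.single (0,0,1) (1::'k)) k"
    unfolding k lookup_tpoly by (cases c) (auto simp: lookup_single when_def coeff_pCons split: nat.splits)
qed

lemma tpoly_zero: "tpoly 0 = 0"
  by (simp add: tpoly_def)


lemma fe1: "[:0,0,0,1:] dvd p \<Longrightarrow> tpoly p \<in> AnnS (Fbig::'k::field dpS)"
  unfolding memJ Jcond_def t3_dvd_iff by (simp add: lookup_tpoly)

lemma fe2: "s \<in> AnnS (Fbig::'k::field dpS) \<Longrightarrow> tzero s \<in> AnnR (FB::'k dpR)"
  unfolding memJ Jcond_def memK lookup_tzero by simp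

lemma fe4: "\<exists>s. r - tzero s \<in> AnnR (FB::'k::field dpR)"
proof
  let ?s = "Poly_Mapping.single (0,0,0) (lk r (0,0)) + Poly_Mapping.single (1,0,0) (lk r (1,0))
     + Poly_Mapping.single (0,1,0) (lk r (0,1)) :: 'k polS"
  show "r - tzero ?s \<in> AnnR FB"
    unfolding memK lookup_minus lookup_tzero by (simp add: lookup_add lookup_single)
qed

lemma fe5: "tzero s \<in> AnnR (FB::'k::field dpR) \<longleftrightarrow> (\<exists>u. s - tpoly [:0,1:] * u \<in> AnnS (Fbig::'k dpS))"
proof
  assume "tzero s \<in> AnnR FB"
  then have h: "lk s (0,0,0) = 0" "lk s (1,0,0) = lk s (0,1,0)"
    unfolding memK lookup_tzero by simp_all
  define \<alpha> where "\<alpha> = lk s (0,0,1) - lk s (1,0,0)"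
  define \<gamma> where "\<gamma> = lk s (0,0,2) - lk s (0,1,1) - lk s (2,0,0) + lk s (1,1,0)"
  define \<beta> where "\<beta> = lk s (1,0,1) - lk s (0,1,1) - lk s (2,0,0) + lk s (0,2,0)"
  define \<delta> where "\<delta> = lk s (1,0,2) - lk s (0,1,2) + lk s (0,2,1) - lk s (2,0,1) + lk s (2,1,0) - lk s (1,2,0)"
  let ?u = "Poly_Mapping.single (0,0,0) \<alpha> + Poly_Mapping.single (1,0,0) \<beta>
     + Poly_Mapping.single (0,0,1) \<gamma> + Poly_Mapping.single (1,0,1) \<delta> :: 'k polS"
  have "s - tpoly [:0,1:] * ?u \<in> AnnS Fbig"
    unfolding memJ Jcond_def tpoly_t mult.commute[of "Poly_Mapping.single (0,0,1) 1"]
    using h by (simp add: lookup_minus lk_mult_single3 lookup_add lookup_single \<alpha>_def \<beta>_def \<gamma>_def \<delta>_def algebra_simps)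
  then show "\<exists>u. s - tpoly [:0,1:] * u \<in> AnnS (Fbig::'k dpS)" by blast
next
  assume "\<exists>u. s - tpoly [:0,1:] * u \<in> AnnS (Fbig::'k dpS)"
  then obtain u where "s - tpoly [:0,1:] * u \<in> AnnS (Fbig::'k dpS)" by blast
  then have "Jcond (s - u * Poly_Mapping.single (0,0,1) 1)" unfolding memJ tpoly_t by (simp add: mult.commute)
  then show "tzero s \<in> AnnR FB"
    unfolding memK lookup_tzero Jcond_def by (simp add: lookup_minus lk_mult_single3)
qed


lemma sum_filter_tpoly:
  assumes "finite E"
  shows "(\<Sum>e\<in>{e\<in>E. c e \<noteq> 0}. tpoly (c e) * e) = (\<Sum>e\<in>E. tpoly (c e) * (e :: 'k::comm_ring_1 polS))"
  apply (rule sum.mono_neutral_left)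
  using assms by (auto simp: tpoly_zero)

lemma coeff_2: "coeff [:a,b,c:] 2 = c" by (simp add: numeral_2_eq_2)

lemma fe3: "free_over_A (AnnS (Fbig::'k::field dpS))"
  unfolding free_over_A_def
proof (rule exI[of _ "{Poly_Mapping.single (0,0,0) 1, Poly_Mapping.single (1,0,0) 1}"], intro conjI allI impI ballI)
  let ?e1 = "Poly_Mapping.single (0,0,0) 1 :: 'k polS"
  let ?ex = "Poly_Mapping.single (1,0,0) 1 :: 'k polS"
  let ?E = "{?e1, ?ex}"
  have ne: "?e1 \<noteq> ?ex" by (metis lookup_single_eq lookup_single_not_eq one_neq_zero prod.inject zero_neq_one)
  have sumE: "(\<Sum>e\<in>{e\<in>?E. c e \<noteq> 0}. tpoly (c e) * e) = tpoly (c ?e1) * ?e1 + tpoly (c ?ex) * ?ex" for c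
    apply (subst sum_filter_tpoly, simp) apply (subst sum.insert) using ne by auto
  fix s :: "'k polS"
  define a2 where "a2 = lk s (0,0,2) - lk s (0,1,1) - lk s (2,0,0) + lk s (1,1,0)"
  define b1 where "b1 = lk s (1,0,1) - lk s (0,1,1) - lk s (2,0,0) + lk s (0,2,0)"
  define b2 where "b2 = lk s (1,0,2) - lk s (0,1,2) + lk s (0,2,1) - lk s (2,0,1) + lk s (2,1,0) - lk s (1,2,0)"
  define P1 where "P1 = [:lk s (0,0,0), lk s (0,0,1) - lk s (0,1,0), a2:]"
  define Px where "Px = [:lk s (1,0,0) - lk s (0,1,0), b1, b2:]"
  define c where "c = (\<lambda>e. if e = ?e1 then P1 else if e = ?ex then Px else 0)"
  show "\<exists>c. finite {e \<in> ?E. c e \<noteq> 0} \<and> s - (\<Sum>e\<in>{e \<in> ?E. c e \<noteq> 0}. tpoly (c e) * e) \<in> AnnS Fbig"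
  proof (intro exI conjI)
    show "finite {e \<in> ?E. c e \<noteq> 0}" by simp
    have "c ?e1 = P1" "c ?ex = Px" using ne by (simp_all add: c_def)
    then show "s - (\<Sum>e\<in>{e \<in> ?E. c e \<noteq> 0}. tpoly (c e) * e) \<in> AnnS Fbig"
      unfolding sumE memJ Jcond_def
      apply (simp add: lookup_minus lookup_add lk_mult_single3 lookup_tpoly coeff_2)
      by (simp add: P1_def Px_def a2_def b1_def b2_def coeff_2 algebra_simps)
  qed
next
  let ?e1 = "Poly_Mapping.single (0,0,0) 1 :: 'k polS"
  let ?ex = "Poly_Mapping.single (1,0,0) 1 :: 'k polS"
  let ?E = "{?e1, ?ex}"
  have ne: "?e1 \<noteq> ?ex" by (metis lookup_single_eq lookup_single_not_eq one_neq_zero prod.inject zero_neq_one)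
  have sumE: "(\<Sum>e\<in>{e\<in>?E. c e \<noteq> 0}. tpoly (c e) * e) = tpoly (c ?e1) * ?e1 + tpoly (c ?ex) * ?ex" for c
    apply (subst sum_filter_tpoly, simp) apply (subst sum.insert) using ne by auto
  fix c :: "'k polS \<Rightarrow> 'k poly" and e
  assume "(\<Sum>e\<in>{e \<in> ?E. c e \<noteq> 0}. tpoly (c e) * e) \<in> AnnS Fbig" and "e \<in> ?E"
  then have J: "Jcond (tpoly (c ?e1) * ?e1 + tpoly (c ?ex) * ?ex)" and e: "e = ?e1 \<or> e = ?ex"
    unfolding sumE memJ by auto
  from J have "coeff (c ?e1) 0 = 0 \<and> coeff (c ?e1) 1 = 0 \<and> coeff (c ?e1) 2 = 0 \<and>
     coeff (c ?ex) 0 = 0 \<and> coeff (c ?ex) 1 = 0 \<and> coeff (c ?ex) 2 = 0"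
    unfolding Jcond_def by (simp add: lookup_add lk_mult_single3 lookup_tpoly) metis
  then show "[:0,0,0,1:] dvd c e" using e by (auto simp: t3_dvd_iff)
qed

theorem freeext: "free_extension (AnnS (Fbig :: 'k::field dpS)) (AnnR FB)"
  unfolding free_extension_def using fe1 fe2 fe3 fe4 fe5 by blast


lemma G1_sub: "AnnR (G1 :: 'k::field dpR) \<subseteq> AnnR FB"
proof
  fix f :: "'k polR" assume "f \<in> AnnR G1"
  then have "lk f (0,0) = 0 \<and> lk f (1,0) = 0 \<and> lk f (0,1) = 0" by (rule AnnG1_D)
  then show "f \<in> AnnR FB" unfolding memK by simp
qed

lemma I1_univ: "I1 = (UNIV :: 'k::field polR set)"
proof -
  have "f * g \<in> AnnR (FB::'k dpR)" if "g \<in> AnnR (G1::'k dpR)" for f g :: "'k polR"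
  proof -
    have "g \<in> ideal2 (varx + vary) (varx * vary)" using that G1_sub AnnFB_eq by blast
    then have "f * g \<in> ideal2 (varx + vary) (varx * vary)" by (rule ideal2_mult)
    then show ?thesis using AnnFB_eq by blast
  qed
  then show ?thesis unfolding I1_def I0_def colon_def by blast
qed

lemma I2_univ: "I2 = (UNIV :: 'k::field polR set)"
  unfolding I2_def I1_univ colon_def by blast

lemma not_sub: "\<not> ({contractR f G1 | f. f \<in> (I1 :: 'k::field polR set)} \<subseteq> {contractR f (FB :: 'k dpR) | f. True})"
proof
  assume a: "{contractR f G1 | f. f \<in> (I1 :: 'k polR set)} \<subseteq> {contractR f (FB :: 'k dpR) | f. True}"
  have "contractR (1::'k polR) G1 \<in> {contractR f G1 | f. f \<in> (I1 :: 'k polR set)}"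
    unfolding I1_univ by blast
  then have "contractR (1::'k polR) G1 \<in> {contractR f (FB :: 'k dpR) | f. True}" using a by (rule subsetD[rotated])
  then obtain g :: "'k polR" where g: "contractR 1 G1 = contractR g FB" by blast
  have "lk (contractR (1::'k polR) G1) (0,2) = 1" unfolding contractR_G1 by (simp add: lookup_one zero_prod_def)
  moreover have "lk (contractR g (FB::'k dpR)) (0,2) = 0" unfolding contractR_FB by simp
  ultimately show False using g by simp
qed

theorem mainTheorem6:
  shows "AnnR (G1 :: 'k::field dpR) \<subseteq> AnnR FB
     \<and> I1 = (UNIV :: 'k polR set) \<and> I2 = (UNIV :: 'k polR set)
     \<and> \<not> ({contractR f G1 | f. f \<in> I1} \<subseteq> {contractR f (FB :: 'k dpR) | f. True})
     \<and> AnnR (FB :: 'k dpR) = ideal2 (varx + vary) (varx * vary)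
     \<and> free_extension (AnnS (Fbig :: 'k dpS)) (AnnR FB)"
  by (intro conjI G1_sub I1_univ I2_univ not_sub AnnFB_eq freeext)

end
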